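(* Let $V\subset V'$ be an immediate extension of valuation rings, $K,K'$ their fraction fields, $\mathfrak m,\mathfrak m'$ their maximal ideals, $y_0\in V'$ and $y_1=y_0^2$. Assume $K'=K(y_0)$ and that for $e=0,1$, $y_e$ is a pseudo limit of a pseudo convergent sequence $v_e=(v_{e,j})_{j<\lambda_e}$ over $V$ which has no pseudo limit in $K$; set $y_{e,j}=(y_e-v_{e,j})/(v_{e,j+1}-v_{e,j})$. Then for every polynomial $g\in V[Y_0,Y_1]$ with $\deg_{Y_i}g\le1$ ($i=0,1$) and all ordinals $\nu_0<\lambda_0$, $\nu_1<\lambda_1$, there exist $\nu_0<j_0<\lambda_0$, $\nu_1<j_1<\lambda_1$, $c\in V\setminus\{0\}$ and a polynomial $g_1\in V[Y_{0,j_0},Y_{1,j_1}]$ such that $g(y_0,y_1)=c\,g_1(y_{0,j_0},y_{1,j_1})$, $g_1\notin\mathfrak m V[Y_{0,j_0},Y_{1,j_1}]$, and the values of the coefficients of all monomials of $g_1-g_1(0,0)$ are pairwise different.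
   Context: Let $\mathrm{val}$ denote the valuation of $V'$. For a limit ordinal $\lambda$, a sequence $(v_j)_{j<\lambda}$ in $V$ is pseudo convergent if $\mathrm{val}(v_i-v_{i''})<\mathrm{val}(v_{i'}-v_{i''})$ for all $i<i'<i''<\lambda$; $w$ is a pseudo limit if $\mathrm{val}(w-v_i)<\mathrm{val}(w-v_{i'})$ for all $i<i'<\lambda$. An extension of valuation rings is immediate if the induced residue field and value group extensions are equalities. *)

theory Defs
  imports "HOL-Computational_Algebra.Polynomial"
begin

definition subring :: "'k::field set \<Rightarrow> bool" where
  "subring R \<longleftrightarrow> 0 \<in> R \<and> 1 \<in> R \<and> (\<forall>x\<in>R. \<forall>y\<in>R. x + y \<in> R \<and> x - y \<in> R \<and> x * y \<in> R)"

definition subfield :: "'k::field set \<Rightarrow> bool" where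
  "subfield F \<longleftrightarrow> subring F \<and> (\<forall>x\<in>F. inverse x \<in> F)"

definition gen_field :: "'k::field set \<Rightarrow> 'k set" where
  "gen_field A = \<Inter>{F. subfield F \<and> A \<subseteq> F}"

definition frac :: "'k::field set \<Rightarrow> 'k set" where
  "frac R = {a / b | a b. a \<in> R \<and> b \<in> R \<and> b \<noteq> 0}"

definition valuation_ring_in :: "'k::field set \<Rightarrow> 'k set \<Rightarrow> bool" where
  "valuation_ring_in R F \<longleftrightarrow> subring R \<and> R \<subseteq> F \<and>
     (\<forall>x\<in>F. x \<noteq> 0 \<longrightarrow> x \<in> R \<or> inverse x \<in> R)"

definition units_of_ring :: "'k::field set \<Rightarrow> 'k set" where
  "units_of_ring R = {x \<in> R. x \<noteq> 0 \<and> inverse x \<in> R}"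

definition maxideal :: "'k::field set \<Rightarrow> 'k set" where
  "maxideal R = R - units_of_ring R"

text \<open>val_le R a b  means  val(a) \<le> val(b)  (with val 0 = \<infinity>), i.e. a divides b in R.\<close>
definition val_le :: "'k::field set \<Rightarrow> 'k \<Rightarrow> 'k \<Rightarrow> bool" where
  "val_le R a b \<longleftrightarrow> (if a = 0 then b = 0 else b / a \<in> R)"

definition val_lt :: "'k::field set \<Rightarrow> 'k \<Rightarrow> 'k \<Rightarrow> bool" where
  "val_lt R a b \<longleftrightarrow> val_le R a b \<and> \<not> val_le R b a"

definition val_eq :: "'k::field set \<Rightarrow> 'k \<Rightarrow> 'k \<Rightarrow> bool" where
  "val_eq R a b \<longleftrightarrow> val_le R a b \<and> val_le R b a"

text \<open>V \<subseteq> V' valuation rings with fraction fields frac V \<subseteq> frac V'; immediate: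
  residue fields equal and value groups equal.\<close>
definition immediate_ext :: "'k::field set \<Rightarrow> 'k set \<Rightarrow> bool" where
  "immediate_ext V V' \<longleftrightarrow>
     (\<forall>x\<in>V'. \<exists>v\<in>V. x - v \<in> maxideal V') \<and>
     (\<forall>x\<in>frac V'. x \<noteq> 0 \<longrightarrow> (\<exists>a\<in>frac V. a \<noteq> 0 \<and> val_eq V' x a))"

text \<open>A limit ordinal \<lambda> is rendered as a well-ordered index type without a greatest
  element; j+1 is the successor of j.\<close>
definition no_max :: "'i::wellorder itself \<Rightarrow> bool" where
  "no_max _ \<longleftrightarrow> (\<forall>i::'i. \<exists>j. i < j)"

definition succ_ord :: "'i::wellorder \<Rightarrow> 'i" where
  "succ_ord j = (LEAST k. j < k)"

definition pseudo_convergent :: "'k::field set \<Rightarrow> ('i::wellorder \<Rightarrow> 'k) \<Rightarrow> bool" where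
  "pseudo_convergent R v \<longleftrightarrow>
     (\<forall>i i' i''. i < i' \<and> i' < i'' \<longrightarrow> val_lt R (v i - v i'') (v i' - v i''))"

definition pseudo_limit :: "'k::field set \<Rightarrow> ('i::wellorder \<Rightarrow> 'k) \<Rightarrow> 'k \<Rightarrow> bool" where
  "pseudo_limit R v w \<longleftrightarrow> (\<forall>i i'. i < i' \<longrightarrow> val_lt R (w - v i) (w - v i'))"

section \<open>Bivariate polynomials as 'k poly poly (inner variable first, outer second)\<close>

definition coeff2 :: "'k::comm_ring_1 poly poly \<Rightarrow> nat \<Rightarrow> nat \<Rightarrow> 'k" where
  "coeff2 p i j = coeff (coeff p j) i"

definition eval2 :: "'k::comm_ring_1 poly poly \<Rightarrow> 'k \<Rightarrow> 'k \<Rightarrow> 'k" where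
  "eval2 p x y = poly (poly p [:y:]) x"

end

theory Submission
  imports Defs
begin

lemma vr_basic:
  assumes "valuation_ring_in R UNIV"
  shows vr_0: "0 \<in> R" and vr_1: "1 \<in> R"
    and vr_add: "x \<in> R \<Longrightarrow> y \<in> R \<Longrightarrow> x + y \<in> R"
    and vr_diff: "x \<in> R \<Longrightarrow> y \<in> R \<Longrightarrow> x - y \<in> R"
    and vr_mult: "x \<in> R \<Longrightarrow> y \<in> R \<Longrightarrow> x * y \<in> R"
    and vr_inv: "x \<noteq> 0 \<Longrightarrow> x \<in> R \<or> inverse x \<in> R"
  using assms unfolding valuation_ring_in_def subring_def by auto

lemma vr_uminus: assumes "valuation_ring_in R UNIV" "x \<in> R" shows "- x \<in> R"
  using vr_diff[OF assms(1) vr_0[OF assms(1)] assms(2)] by simp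

lemma vr_uminus_iff: assumes "valuation_ring_in R UNIV" shows "(- x \<in> R) = (x \<in> R)"
  using vr_uminus[OF assms, of x] vr_uminus[OF assms, of "-x"] by auto

context
  fixes R :: "'k::field set"
  assumes vr: "valuation_ring_in R UNIV"
begin

lemma vle_total: "val_le R a b \<or> val_le R b a"
proof (cases "a = 0 \<or> b = 0")
  case True thus ?thesis by (auto simp: val_le_def vr_0[OF vr])
next
  case False
  hence "b / a \<noteq> 0" by auto
  from vr_inv[OF vr this] show ?thesis using False
    by (auto simp: val_le_def inverse_eq_divide)
qed

lemma vle_refl: "val_le R a a"
  using vr_1[OF vr] vr_0[OF vr] by (auto simp: val_le_def)

lemma vle_0: "val_le R a 0"
  using vr_0[OF vr] by (auto simp: val_le_def)

lemma vle_0_left: "val_le R 0 b \<longleftrightarrow> b = 0"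
  by (auto simp: val_le_def)

lemma vle_trans: "val_le R a b \<Longrightarrow> val_le R b c \<Longrightarrow> val_le R a c"
proof -
  assume ab: "val_le R a b" and bc: "val_le R b c"
  show ?thesis
  proof (cases "a = 0")
    case True thus ?thesis using ab bc by (auto simp: val_le_def)
  next
    case a: False
    show ?thesis
    proof (cases "b = 0")
      case True thus ?thesis using bc a vr_0[OF vr] by (auto simp: val_le_def)
    next
      case False
      have "c / a = (c / b) * (b / a)" using False a by (simp add: field_simps)
      thus ?thesis using ab bc a False vr_mult[OF vr, of "c/b" "b/a"] by (auto simp: val_le_def)
    qed
  qed
qed

lemma vle_add: "val_le R a b \<Longrightarrow> val_le R a c \<Longrightarrow> val_le R a (b + c)"
  using vr_add[OF vr] by (auto simp: val_le_def add_divide_distrib)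

lemma vle_diff: "val_le R a b \<Longrightarrow> val_le R a c \<Longrightarrow> val_le R a (b - c)"
  using vr_diff[OF vr] by (auto simp: val_le_def diff_divide_distrib)

lemma vle_neg_right: "val_le R a (- b) = val_le R a b"
  using vr_uminus_iff[OF vr] by (auto simp: val_le_def)

lemma vle_neg_left: "val_le R (- a) b = val_le R a b"
  using vr_uminus_iff[OF vr] by (auto simp: val_le_def)

lemma vle_mult: "z \<noteq> 0 \<Longrightarrow> val_le R (z * a) (z * b) = val_le R a b"
  by (auto simp: val_le_def)

lemma vle_div: "z \<noteq> 0 \<Longrightarrow> val_le R (a / z) (b / z) = val_le R a b"
  by (auto simp: val_le_def)

lemma vle_not: "\<not> val_le R a b \<Longrightarrow> val_le R b a"
  using vle_total by blast

lemma vlt_add: "val_lt R x y \<Longrightarrow> val_eq R (x + y) x"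
proof -
  assume lt: "val_lt R x y"
  hence xy: "val_le R x y" and nyx: "\<not> val_le R y x" by (auto simp: val_lt_def)
  have 1: "val_le R x (x + y)" using vle_add[OF vle_refl xy] .
  have "val_le R (x + y) x"
  proof (cases "val_le R (x + y) y")
    case True
    from vle_diff[OF vle_refl True] show ?thesis by simp
  next
    case False
    hence "val_le R y (x + y)" by (rule vle_not)
    from vle_diff[OF this vle_refl] have "val_le R y x" by simp
    with nyx show ?thesis by simp
  qed
  with 1 show ?thesis by (simp add: val_eq_def)
qed

lemma veq_sym: "val_eq R a b \<Longrightarrow> val_eq R b a" by (simp add: val_eq_def)
lemma veq_trans: "val_eq R a b \<Longrightarrow> val_eq R b c \<Longrightarrow> val_eq R a c"
  using vle_trans by (auto simp: val_eq_def)
lemma vlt_veq_trans: "val_lt R a b \<Longrightarrow> val_eq R b c \<Longrightarrow> val_lt R a c"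
  using vle_trans by (auto simp: val_eq_def val_lt_def)
lemma veq_vlt_trans: "val_eq R a b \<Longrightarrow> val_lt R b c \<Longrightarrow> val_lt R a c"
  using vle_trans by (auto simp: val_eq_def val_lt_def)
lemma vlt_trans: "val_lt R a b \<Longrightarrow> val_lt R b c \<Longrightarrow> val_lt R a c"
  using vle_trans by (auto simp: val_lt_def)
lemma vlt_le_trans: "val_lt R a b \<Longrightarrow> val_le R b c \<Longrightarrow> val_lt R a c"
  using vle_trans by (auto simp: val_lt_def)
lemma vle_lt_trans: "val_le R a b \<Longrightarrow> val_lt R b c \<Longrightarrow> val_lt R a c"
  using vle_trans by (auto simp: val_lt_def)
lemma vlt_not_eq: "val_lt R a b \<Longrightarrow> \<not> val_eq R a b"
  by (auto simp: val_eq_def val_lt_def)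
lemma vlt_nz: "val_lt R a b \<Longrightarrow> a \<noteq> 0"
  by (auto simp: val_lt_def val_le_def vr_0[OF vr])
lemma vlt_not_le: "val_lt R a b \<longleftrightarrow> \<not> val_le R b a"
  using vle_total by (auto simp: val_lt_def)
lemma vlt_mult: "z \<noteq> 0 \<Longrightarrow> val_lt R (z * a) (z * b) = val_lt R a b"
  using vle_mult by (auto simp: val_lt_def)
lemma veq_mult: "z \<noteq> 0 \<Longrightarrow> val_eq R (z * a) (z * b) = val_eq R a b"
  using vle_mult by (auto simp: val_eq_def)
lemma veq_div: "z \<noteq> 0 \<Longrightarrow> val_eq R (a / z) (b / z) = val_eq R a b"
  using vle_div by (auto simp: val_eq_def)
lemma veq_neg_left: "val_eq R (- a) b = val_eq R a b"
  using vle_neg_left vle_neg_right by (auto simp: val_eq_def)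
lemma veq_neg_right: "val_eq R a (- b) = val_eq R a b"
  using vle_neg_left vle_neg_right by (auto simp: val_eq_def)
lemma vlt_neg_left: "val_lt R (- a) b = val_lt R a b"
  using vle_neg_left vle_neg_right by (auto simp: val_lt_def)
lemma vlt_neg_right: "val_lt R a (- b) = val_lt R a b"
  using vle_neg_left vle_neg_right by (auto simp: val_lt_def)
lemma veq_refl: "val_eq R a a" using vle_refl by (simp add: val_eq_def)
lemma veq_mult_any: "val_eq R a b \<Longrightarrow> val_eq R (z * a) (z * b)"
  using veq_mult[of z a b] veq_refl by (cases "z = 0") auto

end

lemma succ_gt: assumes "no_max TYPE('i::wellorder)" shows "(j::'i) < succ_ord j"
  using assms unfolding no_max_def succ_ord_def by (meson LeastI_ex)

lemma succ_le: "(j::'i::wellorder) < k \<Longrightarrow> succ_ord j \<le> k"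
  unfolding succ_ord_def by (rule Least_le)

lemma avoid:
  fixes f :: "'i::wellorder \<Rightarrow> 'k::field"
  assumes vr: "valuation_ring_in R UNIV" and nm: "no_max TYPE('i)"
    and st: "\<And>j k. j < k \<Longrightarrow> val_lt R (f j) (f k)"
  shows "\<exists>j. \<nu> < j \<and> (\<forall>x\<in>set xs. \<not> val_eq R (f j) x)"
proof (induction xs arbitrary: \<nu>)
  case Nil
  show ?case using succ_gt[OF nm] by auto
next
  case (Cons x xs)
  obtain j where j: "\<nu> < j" "\<forall>y\<in>set xs. \<not> val_eq R (f j) y" using Cons by blast
  show ?case
  proof (cases "val_eq R (f j) x")
    case False thus ?thesis using j by auto
  next
    case True
    obtain j' where j': "j < j'" "\<forall>y\<in>set xs. \<not> val_eq R (f j') y" using Cons by blast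
    have "\<not> val_eq R (f j') x"
    proof
      assume "val_eq R (f j') x"
      hence "val_eq R (f j) (f j')" using True veq_trans[OF vr] veq_sym[OF vr] by blast
      with vlt_not_eq[OF vr st[OF j'(1)]] show False by simp
    qed
    hence "\<nu> < j' \<and> (\<forall>y\<in>set (x # xs). \<not> val_eq R (f j') y)"
      using j j' by auto
    thus ?thesis by blast
  qed
qed

context
  fixes R :: "'k::field set" and v :: "'i::wellorder \<Rightarrow> 'k"
  assumes vr: "valuation_ring_in R UNIV" and nm: "no_max TYPE('i)"
    and pc: "pseudo_convergent R v"
begin

lemma pc_lt: "i < i' \<Longrightarrow> i' < i'' \<Longrightarrow> val_lt R (v i - v i'') (v i' - v i'')"
  using pc unfolding pseudo_convergent_def by blast

lemma gamma: assumes "i < i'" shows "val_eq R (v i - v i') (v (succ_ord i) - v i)"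
proof (cases "i' = succ_ord i")
  case True thus ?thesis
    using veq_neg_right[OF vr, of "v i - v i'" "v i - v i'"] veq_refl[OF vr] by simp
next
  case False
  with succ_le[OF assms] have lt: "succ_ord i < i'" by simp
  have "val_lt R (v i - v i') (v (succ_ord i) - v i')"
    using pc_lt[OF succ_gt[OF nm] lt] .
  hence "val_lt R (- (v i - v i')) (v (succ_ord i) - v i')"
    using vlt_neg_left[OF vr, of "v i - v i'"] by simp
  from vlt_add[OF vr this] have "val_eq R (v (succ_ord i) - v i) (- (v i - v i'))"
    by (simp add: algebra_simps)
  thus ?thesis using veq_neg_right[OF vr] veq_sym[OF vr] by blast
qed

lemma strict: assumes "i < k"
  shows "val_lt R (v (succ_ord i) - v i) (v (succ_ord k) - v k)"
proof -
  have k: "k < succ_ord k" by (rule succ_gt[OF nm])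
  have 1: "val_eq R (v i - v (succ_ord k)) (v (succ_ord i) - v i)"
    using gamma assms k by auto
  have 2: "val_lt R (v i - v (succ_ord k)) (v k - v (succ_ord k))"
    using pc_lt[OF assms k] .
  have 3: "val_eq R (v k - v (succ_ord k)) (v (succ_ord k) - v k)"
    using veq_neg_right[OF vr, of "v k - v (succ_ord k)" "v k - v (succ_ord k)"] veq_refl[OF vr]
    by simp
  show ?thesis using 1 2 3 veq_sym[OF vr] veq_vlt_trans[OF vr] vlt_veq_trans[OF vr] by blast
qed

lemma d_nz: "v (succ_ord i) - v i \<noteq> 0"
  using vlt_nz[OF vr strict[OF succ_gt[OF nm]]] .

lemma stab:
  assumes npl: "\<not> pseudo_limit R v w"
  shows "\<exists>m. \<forall>k. m \<le> k \<longrightarrow> val_eq R (w - v k) (w - v m) \<and>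
             val_lt R (w - v k) (v (succ_ord k) - v k)"
proof -
  have "\<exists>m. val_lt R (w - v m) (v (succ_ord m) - v m)"
  proof (rule ccontr)
    assume "\<not> ?thesis"
    hence le: "\<And>m. val_le R (v (succ_ord m) - v m) (w - v m)"
      using vlt_not_le[OF vr] by blast
    from npl obtain i i' where ii: "i < i'" "\<not> val_lt R (w - v i) (w - v i')"
      unfolding pseudo_limit_def by blast
    have a: "val_lt R (v (succ_ord i) - v i) (w - v i')"
      using strict[OF ii(1)] le[of i'] vlt_le_trans[OF vr] by blast
    have b: "val_eq R (v i' - v i) (v (succ_ord i) - v i)"
      using gamma[OF ii(1)] veq_neg_left[OF vr, of "v i - v i'"] by simp
    have c: "val_lt R (v i' - v i) (w - v i')" using veq_vlt_trans[OF vr b a] .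
    have "val_eq R (w - v i) (v i' - v i)" using vlt_add[OF vr c] by (simp add: algebra_simps)
    hence "val_lt R (w - v i) (w - v i')"
      using veq_trans[OF vr _ b] veq_vlt_trans[OF vr _ a] by blast
    with ii show False by simp
  qed
  then obtain m where m: "val_lt R (w - v m) (v (succ_ord m) - v m)" by blast
  have "val_eq R (w - v k) (w - v m) \<and> val_lt R (w - v k) (v (succ_ord k) - v k)" if "m \<le> k" for k
  proof (cases "m = k")
    case True thus ?thesis using m veq_refl[OF vr] by simp
  next
    case False
    hence mk: "m < k" using that by simp
    have e: "val_eq R (v m - v k) (v (succ_ord m) - v m)" using gamma[OF mk] .
    have l: "val_lt R (w - v m) (v m - v k)"
      using vlt_veq_trans[OF vr m veq_sym[OF vr e]] .
    have eq: "val_eq R (w - v k) (w - v m)" using vlt_add[OF vr l] by (simp add: algebra_simps)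
    have "val_lt R (w - v k) (v (succ_ord k) - v k)"
      using veq_vlt_trans[OF vr eq vlt_trans[OF vr m strict[OF mk]]] .
    thus ?thesis using eq by simp
  qed
  thus ?thesis by blast
qed

end

definition mk :: "'k::field \<Rightarrow> 'k \<Rightarrow> 'k \<Rightarrow> 'k \<Rightarrow> 'k \<Rightarrow> 'k poly poly" where
  "mk a b c d e = [: [:a, b, e:], [:c, d:] :]"

lemma coeff2_mk: "coeff2 (mk a b c d e) i j =
  (if j = 0 then (if i = 0 then a else if i = 1 then b else if i = 2 then e else 0)
   else if j = 1 then (if i = 0 then c else if i = 1 then d else 0) else 0)"
  unfolding mk_def coeff2_def
  by (simp add: coeff_pCons split: nat.split)

lemma coeff2_mk_nz: "coeff2 (mk a b c d e) i j \<noteq> 0 \<Longrightarrow>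
   (i, j) \<in> {(0,0), (1,0), (2,0), (0,1), (1,1)}"
  unfolding coeff2_mk by (auto split: if_splits)

lemma eval2_mk: "eval2 (mk a b c d e) x y = a + b * x + c * y + d * x * y + e * x ^ 2"
  unfolding mk_def eval2_def by (simp add: algebra_simps power2_eq_square)

lemma deg1: "degree p \<le> 1 \<Longrightarrow> p = [: coeff p 0, coeff p 1 :]"
  by (rule poly_eqI) (auto simp: coeff_pCons coeff_eq_0 split: nat.splits)

lemma decomp:
  assumes "degree g \<le> 1" "\<forall>j. degree (coeff g j) \<le> 1"
  shows "g = mk (coeff2 g 0 0) (coeff2 g 1 0) (coeff2 g 0 1) (coeff2 g 1 1) 0"
proof -
  have "g = [: coeff g 0, coeff g 1 :]" using deg1 assms(1) .
  also have "coeff g 0 = [: coeff2 g 0 0, coeff2 g 1 0 :]"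
    using deg1 assms(2) unfolding coeff2_def by blast
  also have "coeff g 1 = [: coeff2 g 0 1, coeff2 g 1 1 :]"
    using deg1 assms(2) unfolding coeff2_def by blast
  finally show ?thesis by (simp add: mk_def)
qed

definition vmin :: "'k::field set \<Rightarrow> 'k \<Rightarrow> 'k \<Rightarrow> 'k" where
  "vmin R a b = (if val_le R a b then a else b)"

lemma vmin_props:
  assumes vr: "valuation_ring_in R UNIV"
  shows "val_le R (vmin R a b) a" "val_le R (vmin R a b) b" "vmin R a b \<in> {a, b}"
    "vmin R a b = 0 \<Longrightarrow> a = 0 \<and> b = 0"
  subgoal using vle_refl[OF vr] vle_not[OF vr] by (simp add: vmin_def)
  subgoal using vle_refl[OF vr] vle_not[OF vr] by (simp add: vmin_def)
  subgoal by (simp add: vmin_def)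
  subgoal using vr_0[OF vr] by (auto simp: vmin_def val_le_def split: if_splits)
  done

abbreviation distinct_vals :: "'k::field set \<Rightarrow> 'k poly poly \<Rightarrow> bool" where
  "distinct_vals R g1 \<equiv> (\<forall>i j i' j'. (i, j) \<noteq> (0, 0) \<and> (i', j') \<noteq> (0, 0) \<and> (i, j) \<noteq> (i', j') \<and>
                 coeff2 g1 i j \<noteq> 0 \<and> coeff2 g1 i' j' \<noteq> 0
                 \<longrightarrow> \<not> val_eq R (coeff2 g1 i j) (coeff2 g1 i' j'))"

lemma dist_mk:
  assumes vr: "valuation_ring_in R UNIV"
    and bc: "B \<noteq> 0 \<Longrightarrow> C \<noteq> 0 \<Longrightarrow> \<not> val_eq R B C"
    and bd: "B \<noteq> 0 \<Longrightarrow> D \<noteq> 0 \<Longrightarrow> \<not> val_eq R B D"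
    and be: "B \<noteq> 0 \<Longrightarrow> E \<noteq> 0 \<Longrightarrow> \<not> val_eq R B E"
    and cd: "C \<noteq> 0 \<Longrightarrow> D \<noteq> 0 \<Longrightarrow> \<not> val_eq R C D"
    and ce: "C \<noteq> 0 \<Longrightarrow> E \<noteq> 0 \<Longrightarrow> \<not> val_eq R C E"
    and de: "D \<noteq> 0 \<Longrightarrow> E \<noteq> 0 \<Longrightarrow> \<not> val_eq R D E"
  shows "distinct_vals R (mk A B C D E)"
proof (intro allI impI)
  fix i j i' j'
  assume h: "(i, j) \<noteq> (0, 0) \<and> (i', j') \<noteq> (0, 0) \<and> (i, j) \<noteq> (i', j') \<and>
             coeff2 (mk A B C D E) i j \<noteq> 0 \<and> coeff2 (mk A B C D E) i' j' \<noteq> 0"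
  have sym: "\<And>a b. \<not> val_eq R a b \<Longrightarrow> \<not> val_eq R b a" using veq_sym[OF vr] by blast
  from h have p1: "(i, j) \<in> {(1,0), (2,0), (0,1), (1,1)}" and p2: "(i', j') \<in> {(1,0), (2,0), (0,1), (1,1)}"
    using coeff2_mk_nz[of A B C D E i j] coeff2_mk_nz[of A B C D E i' j'] by auto
  show "\<not> val_eq R (coeff2 (mk A B C D E) i j) (coeff2 (mk A B C D E) i' j')"
    using p1 p2 h bc bd be cd ce de sym[OF bc] sym[OF bd] sym[OF be] sym[OF cd] sym[OF ce] sym[OF de]
    by (auto simp: coeff2_mk)
qed

lemma coeff2_mk_div: "coeff2 (mk (A/c) (B/c) (C/c) (D/c) (E/c)) i j = coeff2 (mk A B C D E) i j / c"
  by (simp add: coeff2_mk)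

lemma finish:
  fixes V V' :: "'k::field set"
  assumes vr: "valuation_ring_in V' UNIV" and Vs: "subring V" and dom: "V' \<inter> frac V = V"
    and inV: "A \<in> V" "B \<in> V" "C \<in> V" "D \<in> V" "E \<in> V"
    and nz: "\<not> (A = 0 \<and> B = 0 \<and> C = 0 \<and> D = 0 \<and> E = 0)"
    and dist: "distinct_vals V' (mk A B C D E)"
  shows "\<exists>c g1. c \<in> V \<and> c \<noteq> 0 \<and> (\<forall>i j. coeff2 g1 i j \<in> V) \<and>
     eval2 (mk A B C D E) x y = c * eval2 g1 x y \<and>
     (\<exists>i j. coeff2 g1 i j \<notin> maxideal V) \<and> distinct_vals V' g1"
proof -
  define c where "c = vmin V' (vmin V' (vmin V' A B) (vmin V' C D)) E"
  note vp = vmin_props[OF vr]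
  have cin: "c \<in> {A, B, C, D, E}" unfolding c_def
    using vp(3)[of A B] vp(3)[of C D] vp(3)[of "vmin V' A B" "vmin V' C D"]
      vp(3)[of "vmin V' (vmin V' A B) (vmin V' C D)" E] by auto
  have cnz: "c \<noteq> 0" unfolding c_def using vp(4) nz by blast
  have cle: "val_le V' c A \<and> val_le V' c B \<and> val_le V' c C \<and> val_le V' c D \<and> val_le V' c E"
    unfolding c_def using vp(1,2) vle_trans[OF vr] by meson
  have cV: "c \<in> V" using cin inV by auto
  define g1 where "g1 = mk (A/c) (B/c) (C/c) (D/c) (E/c)"
  have divV: "z / c \<in> V" if "z \<in> V" "val_le V' c z" for z
  proof -
    have "z / c \<in> V'" using that cnz by (simp add: val_le_def)
    moreover have "z / c \<in> frac V" using that cV cnz unfolding frac_def by blast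
    ultimately show ?thesis using dom by blast
  qed
  have V0: "0 \<in> V" using Vs by (simp add: subring_def)
  have coV: "coeff2 g1 i j \<in> V" for i j
    unfolding g1_def coeff2_mk using divV inV cle V0 by auto
  have ev: "eval2 (mk A B C D E) x y = c * eval2 g1 x y"
    unfolding g1_def eval2_mk using cnz by (simp add: field_simps)
  have one: "1 \<notin> maxideal V"
    using Vs by (simp add: maxideal_def units_of_ring_def subring_def)
  have "\<exists>i j. coeff2 g1 i j = 1"
  proof -
    have "coeff2 g1 i j = coeff2 (mk A B C D E) i j / c" for i j
      unfolding g1_def by (rule coeff2_mk_div)
    then show ?thesis using cin cnz
      by (auto simp: coeff2_mk intro: exI[of _ 0] exI[of _ 1] exI[of _ 2])
  qed
  hence unit: "\<exists>i j. coeff2 g1 i j \<notin> maxideal V" using one by metis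
  have d1: "distinct_vals V' g1"
    unfolding g1_def coeff2_mk_div using dist veq_div[OF vr cnz] cnz by auto
  show ?thesis using cV cnz coV ev unit d1 by blast
qed

lemma id0:
  fixes y p q s r t u :: "'k::field"
  assumes "y = p + q * s" "y ^ 2 = r + t * u"
  shows "(p ^ 2 - r) + (q * (2 * p)) * s + (- t) * u + 0 * s * u + (q * q) * s ^ 2 = 0"
proof -
  have "t * u = (p + q * s) ^ 2 - r" using assms by simp
  hence "(- t) * u = r - (p + q * s) ^ 2" by (simp add: algebra_simps)
  thus ?thesis by (simp add: algebra_simps power2_eq_square)
qed

lemma id1:
  fixes y p q s r t u Y :: "'k::field"
  assumes "y = p + q * s" "Y = r + t * u"
  shows "a + b * y + c * Y + d * y * Y + 0 * y ^ 2 =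
    (a + b * p + c * r + d * p * r) + ((b + d * r) * q) * s + ((c + d * p) * t) * u
     + (d * q * t) * s * u + 0 * s ^ 2"
  unfolding assms by (simp add: algebra_simps)

lemma subst_eq: "q \<noteq> 0 \<Longrightarrow> y = p + q * ((y - p) / q)" for y p q :: "'k::field"
  by simp

theorem lemma1p4:
  fixes V V' :: "'k::field set" and y0 :: 'k
    and v0 :: "'i0::wellorder \<Rightarrow> 'k" and v1 :: "'i1::wellorder \<Rightarrow> 'k"
  assumes V'_val: "valuation_ring_in V' UNIV"
    and V_val: "valuation_ring_in V (frac V)"
    and sub: "V \<subseteq> V'"
    and dom: "V' \<inter> frac V = V"
    and imm: "immediate_ext V V'"
    and y0: "y0 \<in> V'"
    and gen: "gen_field (frac V \<union> {y0}) = UNIV"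
    and lim0: "no_max TYPE('i0)" and lim1: "no_max TYPE('i1)"
    and v0V: "range v0 \<subseteq> V" and pc0: "pseudo_convergent V' v0"
    and pl0: "pseudo_limit V' v0 y0"
    and nl0: "\<not> (\<exists>w\<in>frac V. pseudo_limit V' v0 w)"
    and v1V: "range v1 \<subseteq> V" and pc1: "pseudo_convergent V' v1"
    and pl1: "pseudo_limit V' v1 (y0^2)"
    and nl1: "\<not> (\<exists>w\<in>frac V. pseudo_limit V' v1 w)"
  shows "\<forall>g \<nu>0 \<nu>1. (\<forall>i j. coeff2 g i j \<in> V) \<and> degree g \<le> 1 \<and> (\<forall>j. degree (coeff g j) \<le> 1)
     \<longrightarrow> (\<exists>j0 j1 c g1.
            \<nu>0 < j0 \<and> \<nu>1 < j1 \<and> c \<in> V \<and> c \<noteq> 0 \<and> (\<forall>i j. coeff2 g1 i j \<in> V) \<and>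
            eval2 g y0 (y0^2) =
              c * eval2 g1 ((y0 - v0 j0) / (v0 (succ_ord j0) - v0 j0))
                           ((y0^2 - v1 j1) / (v1 (succ_ord j1) - v1 j1)) \<and>
            (\<exists>i j. coeff2 g1 i j \<notin> maxideal V) \<and>
            (\<forall>i j i' j'. (i, j) \<noteq> (0, 0) \<and> (i', j') \<noteq> (0, 0) \<and> (i, j) \<noteq> (i', j') \<and>
                 coeff2 g1 i j \<noteq> 0 \<and> coeff2 g1 i' j' \<noteq> 0
                 \<longrightarrow> \<not> val_eq V' (coeff2 g1 i j) (coeff2 g1 i' j')))"
proof (intro allI impI)
  fix g \<nu>0 \<nu>1
  assume H: "(\<forall>i j. coeff2 g i j \<in> V) \<and> degree g \<le> 1 \<and> (\<forall>j. degree (coeff g j) \<le> 1)"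
  note vr = V'_val
  have Vs: "subring V" using V_val by (simp add: valuation_ring_in_def)
  have V0: "0 \<in> V" and V1: "1 \<in> V" and Vadd: "\<And>x y. x \<in> V \<Longrightarrow> y \<in> V \<Longrightarrow> x + y \<in> V"
    and Vdiff: "\<And>x y. x \<in> V \<Longrightarrow> y \<in> V \<Longrightarrow> x - y \<in> V"
    and Vmult: "\<And>x y. x \<in> V \<Longrightarrow> y \<in> V \<Longrightarrow> x * y \<in> V"
    using Vs by (auto simp: subring_def)
  have Vneg: "x \<in> V \<Longrightarrow> - x \<in> V" for x using Vdiff[OF V0, of x] by simp
  have fracI: "x \<in> V \<Longrightarrow> y \<in> V \<Longrightarrow> y \<noteq> 0 \<Longrightarrow> x / y \<in> frac V" for x y
    unfolding frac_def by blast
  have v0in: "v0 j \<in> V" for j using v0V by auto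
  have v1in: "v1 j \<in> V" for j using v1V by auto
  let ?d0 = "\<lambda>j. v0 (succ_ord j) - v0 j"
  let ?d1 = "\<lambda>j. v1 (succ_ord j) - v1 j"
  let ?al = "\<lambda>j. (y0 - v0 j) / (v0 (succ_ord j) - v0 j)"
  let ?be = "\<lambda>j. (y0^2 - v1 j) / (v1 (succ_ord j) - v1 j)"
  have d0nz: "?d0 j \<noteq> 0" for j using d_nz[OF vr lim0 pc0] .
  have d1nz: "?d1 j \<noteq> 0" for j using d_nz[OF vr lim1 pc1] .
  have st0: "j < k \<Longrightarrow> val_lt V' (?d0 j) (?d0 k)" for j k using strict[OF vr lim0 pc0] .
  have st1: "j < k \<Longrightarrow> val_lt V' (?d1 j) (?d1 k)" for j k using strict[OF vr lim1 pc1] .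
  have d0in: "?d0 j \<in> V" for j using v0in Vdiff by blast
  have d1in: "?d1 j \<in> V" for j using v1in Vdiff by blast
  define a where "a = coeff2 g 0 0"
  define b where "b = coeff2 g 1 0"
  define c where "c = coeff2 g 0 1"
  define d where "d = coeff2 g 1 1"
  have abcd: "a \<in> V" "b \<in> V" "c \<in> V" "d \<in> V" using H unfolding a_def b_def c_def d_def by auto
  have gdec: "g = mk a b c d 0" unfolding a_def b_def c_def d_def using decomp H by blast
  have key: "\<exists>j0 j1 A B C D E. \<nu>0 < j0 \<and> \<nu>1 < j1 \<and> A \<in> V \<and> B \<in> V \<and> C \<in> V \<and> D \<in> V \<and> E \<in> V \<and>
     \<not> (A = 0 \<and> B = 0 \<and> C = 0 \<and> D = 0 \<and> E = 0) \<and> distinct_vals V' (mk A B C D E) \<and>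
     eval2 g y0 (y0^2) = eval2 (mk A B C D E) (?al j0) (?be j1)"
  proof (cases "a = 0 \<and> b = 0 \<and> c = 0 \<and> d = 0")
    case True
    have ev0: "eval2 g y0 (y0^2) = 0" using True gdec by (simp add: eval2_mk)
    have "\<not> pseudo_limit V' v0 0" using nl0 fracI[OF V0 V1] by auto
    from stab[OF vr lim0 pc0 this] obtain m where
      m: "\<And>k. m \<le> k \<Longrightarrow> val_eq V' (0 - v0 k) (0 - v0 m)" by blast
    have "\<exists>j. max \<nu>0 m < j \<and> (\<forall>x\<in>set [2 * v0 m]. \<not> val_eq V' (?d0 j) x)"
      by (rule avoid[OF vr lim0]) (rule st0)
    then obtain j0 where j0: "max \<nu>0 m < j0" "\<forall>x\<in>set [2 * v0 m]. \<not> val_eq V' (?d0 j0) x"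
      by blast
    have "val_eq V' (v0 j0) (v0 m)" using m[of j0] j0(1)
      using veq_neg_left[OF vr] veq_neg_right[OF vr] by force
    hence e2: "val_eq V' (2 * v0 j0) (2 * v0 m)" by (rule veq_mult_any[OF vr])
    have n1: "\<not> val_eq V' (?d0 j0) (2 * v0 j0)" using j0(2) veq_trans[OF vr _ e2] by auto
    define E where "E = ?d0 j0 * ?d0 j0"
    define B where "B = ?d0 j0 * (2 * v0 j0)"
    have EB: "\<not> val_eq V' E B" unfolding E_def B_def using veq_mult[OF vr d0nz] n1 by simp
    have "\<exists>j. \<nu>1 < j \<and> (\<forall>x\<in>set [E, B]. \<not> val_eq V' (?d1 j) x)"
      by (rule avoid[OF vr lim1]) (rule st1)
    then obtain j1 where j1: "\<nu>1 < j1" "\<forall>x\<in>set [E, B]. \<not> val_eq V' (?d1 j1) x"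
      by blast
    define C where "C = - ?d1 j1"
    define A where "A = v0 j0 ^ 2 - v1 j1"
    have CE: "\<not> val_eq V' C E" and CB: "\<not> val_eq V' C B"
      unfolding C_def using j1(2) veq_neg_left[OF vr, of "?d1 j1"] by auto
    have dist: "distinct_vals V' (mk A B C 0 E)"
    proof (rule dist_mk[OF vr])
      show "\<not> val_eq V' B C" using CB veq_sym[OF vr] by blast
      show "\<not> val_eq V' B E" using EB veq_sym[OF vr] by blast
      show "\<not> val_eq V' C E" using CE by blast
    qed simp_all
    have inV: "A \<in> V" "B \<in> V" "C \<in> V" "E \<in> V"
      unfolding A_def B_def C_def E_def power2_eq_square
      using Vadd[OF V1 V1] by (auto simp: one_add_one intro!: Vmult Vdiff Vneg v0in v1in)
    have nz: "C \<noteq> 0" unfolding C_def using d1nz[of j1] by simp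
    have "eval2 (mk A B C 0 E) (?al j0) (?be j1) = 0"
      unfolding eval2_mk A_def B_def C_def E_def
      by (rule id0[OF subst_eq[OF d0nz] subst_eq[OF d1nz]])
    hence ev: "eval2 g y0 (y0^2) = eval2 (mk A B C 0 E) (?al j0) (?be j1)" using ev0 by simp
    have nz': "\<not> (A = 0 \<and> B = 0 \<and> C = 0 \<and> (0::'k) = 0 \<and> E = 0)" using nz by simp
    have j0': "\<nu>0 < j0" using j0(1) by simp
    show ?thesis using j0' j1(1) inV V0 nz' dist ev
      by (intro exI[of _ j0] exI[of _ j1] exI[of _ A] exI[of _ B] exI[of _ C] exI[of _ 0] exI[of _ E] conjI)
         assumption+
  next
    case nT: False
    show ?thesis
    proof (cases "d = 0")
      case True
      define j1 where "j1 = succ_ord \<nu>1"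
      have j1: "\<nu>1 < j1" unfolding j1_def using succ_gt[OF lim1] .
      obtain j0 where j0: "\<nu>0 < j0" "b \<noteq> 0 \<longrightarrow> \<not> val_eq V' (b * ?d0 j0) (c * ?d1 j1)"
      proof (cases "b = 0")
        case True thus ?thesis using that succ_gt[OF lim0] by blast
      next
        case False
        have "\<exists>j. \<nu>0 < j \<and> (\<forall>x\<in>set [c * ?d1 j1]. \<not> val_eq V' (b * ?d0 j) x)"
          by (rule avoid[OF vr lim0]) (use st0 vlt_mult[OF vr False] in blast)
        thus ?thesis using that by auto
      qed
      define A where "A = a + b * v0 j0 + c * v1 j1"
      define B where "B = b * ?d0 j0"
      define C where "C = c * ?d1 j1"
      have dist: "distinct_vals V' (mk A B C 0 0)"
        by (rule dist_mk[OF vr]) (use j0(2) in \<open>auto simp: B_def C_def\<close>)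
      have inV: "A \<in> V" "B \<in> V" "C \<in> V"
        unfolding A_def B_def C_def
        using abcd by (auto intro!: Vmult Vdiff Vadd v0in v1in)
      have nz: "\<not> (A = 0 \<and> B = 0 \<and> C = 0)" using nT True d0nz[of j0] d1nz[of j1]
        unfolding A_def B_def C_def by auto
      have ev: "eval2 g y0 (y0^2) = eval2 (mk A B C 0 0) (?al j0) (?be j1)"
      proof -
        have "eval2 g y0 (y0^2) = eval2 (mk (a + b * v0 j0 + c * v1 j1 + d * v0 j0 * v1 j1)
           ((b + d * v1 j1) * ?d0 j0) ((c + d * v0 j0) * ?d1 j1) (d * ?d0 j0 * ?d1 j1) 0)
           (?al j0) (?be j1)"
          unfolding gdec eval2_mk
          by (rule id1[OF subst_eq[OF d0nz[of j0]] subst_eq[OF d1nz[of j1]]])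
        thus ?thesis using True by (simp add: A_def B_def C_def)
      qed
      have nz': "\<not> (A = 0 \<and> B = 0 \<and> C = 0 \<and> (0::'k) = 0 \<and> (0::'k) = 0)" using nz by simp
      show ?thesis using j0(1) j1 inV V0 nz' dist ev
        by (intro exI[of _ j0] exI[of _ j1] exI[of _ A] exI[of _ B] exI[of _ C] exI[of _ 0] exI[of _ 0] conjI)
         assumption+
    next
      case dnz: False
      define w1 where "w1 = - b / d"
      define w0 where "w0 = - c / d"
      have "\<not> pseudo_limit V' v1 w1" using nl1 fracI[OF Vneg[OF abcd(2)] abcd(4) dnz]
        unfolding w1_def by auto
      from stab[OF vr lim1 pc1 this] obtain m1 where
        m1: "\<And>k. m1 \<le> k \<Longrightarrow> val_eq V' (w1 - v1 k) (w1 - v1 m1) \<and> val_lt V' (w1 - v1 k) (?d1 k)"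
        by blast
      have "\<not> pseudo_limit V' v0 w0" using nl0 fracI[OF Vneg[OF abcd(3)] abcd(4) dnz]
        unfolding w0_def by auto
      from stab[OF vr lim0 pc0 this] obtain m0 where
        m0: "\<And>k. m0 \<le> k \<Longrightarrow> val_eq V' (w0 - v0 k) (w0 - v0 m0) \<and> val_lt V' (w0 - v0 k) (?d0 k)"
        by blast
      define j1 where "j1 = succ_ord (max \<nu>1 m1)"
      have j1: "max \<nu>1 m1 < j1" unfolding j1_def using succ_gt[OF lim1] .
      define \<beta> where "\<beta> = b + d * v1 j1"
      obtain j0 where j0: "max \<nu>0 m0 < j0"
        "\<beta> \<noteq> 0 \<longrightarrow> \<not> val_eq V' (\<beta> * ?d0 j0) ((c + d * v0 m0) * ?d1 j1)"
      proof (cases "\<beta> = 0")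
        case True thus ?thesis using that succ_gt[OF lim0] by blast
      next
        case False
        have "\<exists>j. max \<nu>0 m0 < j \<and> (\<forall>x\<in>set [(c + d * v0 m0) * ?d1 j1]. \<not> val_eq V' (\<beta> * ?d0 j) x)"
          by (rule avoid[OF vr lim0]) (use st0 vlt_mult[OF vr False] in blast)
        thus ?thesis using that by auto
      qed
      define A where "A = a + b * v0 j0 + c * v1 j1 + d * v0 j0 * v1 j1"
      define B where "B = \<beta> * ?d0 j0"
      define C where "C = (c + d * v0 j0) * ?d1 j1"
      define D where "D = d * ?d0 j0 * ?d1 j1"
      have beq: "\<beta> = (- d) * (w1 - v1 j1)" unfolding \<beta>_def w1_def using dnz
        by (simp add: field_simps)
      have ceq: "c + d * v0 k = (- d) * (w0 - v0 k)" for k unfolding w0_def using dnz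
        by (simp add: field_simps)
      have mdnz: "- d \<noteq> 0" using dnz by simp
      have m1j1: "m1 \<le> j1" using j1 by (simp add: less_imp_le)
      have m0j0: "m0 \<le> j0" using j0(1) by (simp add: less_imp_le)
      have F1: "val_lt V' \<beta> (d * ?d1 j1)"
        using m1[OF m1j1] vlt_mult[OF vr mdnz, of "w1 - v1 j1" "?d1 j1"] beq
          vlt_neg_right[OF vr, of \<beta> "d * ?d1 j1"] by simp
      have BD: "\<not> val_eq V' B D"
      proof -
        have "val_lt V' (?d0 j0 * \<beta>) (?d0 j0 * (d * ?d1 j1))"
          using vlt_mult[OF vr d0nz] F1 by blast
        hence "val_lt V' B D" unfolding B_def D_def by (simp add: algebra_simps)
        thus ?thesis by (rule vlt_not_eq[OF vr])
      qed
      have F2: "val_lt V' (c + d * v0 j0) (d * ?d0 j0)"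
        using m0[OF m0j0] vlt_mult[OF vr mdnz, of "w0 - v0 j0" "?d0 j0"] ceq[of j0]
          vlt_neg_right[OF vr, of "c + d * v0 j0" "d * ?d0 j0"] by simp
      have CD: "\<not> val_eq V' C D"
      proof -
        have "val_lt V' (?d1 j1 * (c + d * v0 j0)) (?d1 j1 * (d * ?d0 j0))"
          using vlt_mult[OF vr d1nz] F2 by blast
        hence "val_lt V' C D" unfolding C_def D_def by (simp add: algebra_simps)
        thus ?thesis by (rule vlt_not_eq[OF vr])
      qed
      have F3: "val_eq V' C ((c + d * v0 m0) * ?d1 j1)"
      proof -
        have "val_eq V' ((- d) * (w0 - v0 j0)) ((- d) * (w0 - v0 m0))"
          using veq_mult_any[OF vr conjunct1[OF m0[OF m0j0]], of "- d"] by simp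
        hence "val_eq V' (c + d * v0 j0) (c + d * v0 m0)" using ceq by simp
        hence "val_eq V' (?d1 j1 * (c + d * v0 j0)) (?d1 j1 * (c + d * v0 m0))"
          by (rule veq_mult_any[OF vr])
        thus ?thesis unfolding C_def by (simp add: algebra_simps)
      qed
      have BC: "B \<noteq> 0 \<Longrightarrow> \<not> val_eq V' B C"
      proof
        assume "B \<noteq> 0" "val_eq V' B C"
        hence "\<beta> \<noteq> 0" unfolding B_def by auto
        with j0(2) have "\<not> val_eq V' B ((c + d * v0 m0) * ?d1 j1)" unfolding B_def by simp
        with veq_trans[OF vr \<open>val_eq V' B C\<close> F3] show False by simp
      qed
      have dist: "distinct_vals V' (mk A B C D 0)"
        by (rule dist_mk[OF vr]) (use BC BD CD in auto)
      have inV: "A \<in> V" "B \<in> V" "C \<in> V" "D \<in> V"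
        unfolding A_def B_def C_def D_def \<beta>_def
        using abcd by (auto intro!: Vmult Vdiff Vadd v0in v1in)
      have nz: "D \<noteq> 0" using dnz d0nz[of j0] d1nz[of j1] unfolding D_def by auto
      have ev: "eval2 g y0 (y0^2) = eval2 (mk A B C D 0) (?al j0) (?be j1)"
        unfolding gdec eval2_mk A_def B_def C_def D_def \<beta>_def
        by (rule id1[OF subst_eq[OF d0nz[of j0]] subst_eq[OF d1nz[of j1]]])
      have nz': "\<not> (A = 0 \<and> B = 0 \<and> C = 0 \<and> D = 0 \<and> (0::'k) = 0)" using nz by simp
      have j0': "\<nu>0 < j0" and j1': "\<nu>1 < j1" using j0(1) j1 by simp_all
      show ?thesis using j0' j1' inV V0 nz' dist ev
        by (intro exI[of _ j0] exI[of _ j1] exI[of _ A] exI[of _ B] exI[of _ C] exI[of _ D] exI[of _ 0] conjI)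
         assumption+
    qed
  qed
  then obtain j0 j1 A B C D E where J: "\<nu>0 < j0" "\<nu>1 < j1" "A \<in> V" "B \<in> V" "C \<in> V" "D \<in> V" "E \<in> V"
     "\<not> (A = 0 \<and> B = 0 \<and> C = 0 \<and> D = 0 \<and> E = 0)" "distinct_vals V' (mk A B C D E)"
     "eval2 g y0 (y0^2) = eval2 (mk A B C D E) (?al j0) (?be j1)"
    by atomize_elim (rule key)
  from finish[OF vr Vs dom J(3-9), of "?al j0" "?be j1"] obtain cc g1 where
    G: "cc \<in> V" "cc \<noteq> 0" "\<forall>i j. coeff2 g1 i j \<in> V"
     "eval2 (mk A B C D E) (?al j0) (?be j1) = cc * eval2 g1 (?al j0) (?be j1)"
     "\<exists>i j. coeff2 g1 i j \<notin> maxideal V" "distinct_vals V' g1"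
    by atomize_elim assumption
  have ev: "eval2 g y0 (y0^2) = cc * eval2 g1 (?al j0) (?be j1)" using J(10) G(4) by (rule trans)
  show "\<exists>j0 j1 c g1.
            \<nu>0 < j0 \<and> \<nu>1 < j1 \<and> c \<in> V \<and> c \<noteq> 0 \<and> (\<forall>i j. coeff2 g1 i j \<in> V) \<and>
            eval2 g y0 (y0^2) =
              c * eval2 g1 ((y0 - v0 j0) / (v0 (succ_ord j0) - v0 j0))
                           ((y0^2 - v1 j1) / (v1 (succ_ord j1) - v1 j1)) \<and>
            (\<exists>i j. coeff2 g1 i j \<notin> maxideal V) \<and>
            (\<forall>i j i' j'. (i, j) \<noteq> (0, 0) \<and> (i', j') \<noteq> (0, 0) \<and> (i, j) \<noteq> (i', j') \<and>
                 coeff2 g1 i j \<noteq> 0 \<and> coeff2 g1 i' j' \<noteq> 0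
                 \<longrightarrow> \<not> val_eq V' (coeff2 g1 i j) (coeff2 g1 i' j'))"
    using J(1,2) G(1,2,3,5,6) ev
    by (intro exI[of _ j0] exI[of _ j1] exI[of _ cc] exI[of _ g1] conjI) assumption+
qed


end
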